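(* Let $S$ be a finite generating subset of a group $G$ with $1\in S$ and $|S|\ge3$. Assume that either $G$ is infinite or $\alpha_2(S)\le\alpha_{-2}(S)$. Let $H$ be a $2$-atom of $S$ with $1\in H$ and $|\Pi^l(H)|=1$. Then $|H|\le|S|-1$.
   Context: For a group $G$ and $S\subseteq G$, $\mathrm{Cay}(G,S)$ is the graph on $G$ with arcs $(x,y)$, $x^{-1}y\in S$; the image of $X$ is $XS$. For a reflexive locally finite graph $\Gamma=(V,E)$, $\partial(X)=\Gamma(X)\setminus X$; $\Gamma$ is $k$-separable if some finite $X$ has $|X|\ge k$ and $|V\setminus\Gamma(X)|\ge k$; then $\kappa_k(\Gamma)=\min\{|\partial(X)|: X\text{ finite},|X|\ge k,|V\setminus\Gamma(X)|\ge k\}$, a $k$-fragment is such an $X$ attaining the minimum, a $k$-atom is a $k$-fragment of minimum cardinality, $\alpha_k(\Gamma)$ its cardinality. If $\Gamma$ is not $k$-separable and $|V|\ge 2k-1$, by convention $\kappa_k(\Gamma)=|V|-2k+1$ and every $k$-subset is a $k$-fragment and $k$-atom. For $S$ with $1\in S$, these notions for $S$ refer to $\mathrm{Cay}(\langle S\rangle,S)$, and $\alpha_{-k}(S)=\alpha_k(\mathrm{Cay}(\langle S\rangle,S^{-1}))$. $\Pi^l(X)=\{x\in G: xX=X\}$. *)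

theory Defs
  imports "HOL-Algebra.Algebra"
begin

text \<open>A reflexive locally finite graph is given by its vertex set Vs and its
image operator Nb (so Nb Xs = Gamma(Xs)). Boundary: Nb Xs - Xs.\<close>

definition at_least :: "nat \<Rightarrow> 'a set \<Rightarrow> bool" where
  "at_least k A \<longleftrightarrow> infinite A \<or> k \<le> card A"

definition admissible :: "'a set \<Rightarrow> ('a set \<Rightarrow> 'a set) \<Rightarrow> nat \<Rightarrow> 'a set \<Rightarrow> bool" where
  "admissible Vs Nb k Xs \<longleftrightarrow> finite Xs \<and> Xs \<subseteq> Vs \<and> k \<le> card Xs \<and> at_least k (Vs - Nb Xs)"

definition separable :: "'a set \<Rightarrow> ('a set \<Rightarrow> 'a set) \<Rightarrow> nat \<Rightarrow> bool" where
  "separable Vs Nb k \<longleftrightarrow> (\<exists>Xs. admissible Vs Nb k Xs)"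

definition kappa :: "'a set \<Rightarrow> ('a set \<Rightarrow> 'a set) \<Rightarrow> nat \<Rightarrow> nat" where
  "kappa Vs Nb k = (if separable Vs Nb k
     then (LEAST n. \<exists>Xs. admissible Vs Nb k Xs \<and> card (Nb Xs - Xs) = n)
     else card Vs + 1 - 2 * k)"

definition fragment :: "'a set \<Rightarrow> ('a set \<Rightarrow> 'a set) \<Rightarrow> nat \<Rightarrow> 'a set \<Rightarrow> bool" where
  "fragment Vs Nb k Xs \<longleftrightarrow> (if separable Vs Nb k
     then admissible Vs Nb k Xs \<and> card (Nb Xs - Xs) = kappa Vs Nb k
     else finite Vs \<and> 2 * k \<le> card Vs + 1 \<and> Xs \<subseteq> Vs \<and> card Xs = k)"

definition atom :: "'a set \<Rightarrow> ('a set \<Rightarrow> 'a set) \<Rightarrow> nat \<Rightarrow> 'a set \<Rightarrow> bool" where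
  "atom Vs Nb k Xs \<longleftrightarrow> fragment Vs Nb k Xs \<and> (\<forall>Ys. fragment Vs Nb k Ys \<longrightarrow> card Xs \<le> card Ys)"

definition alpha :: "'a set \<Rightarrow> ('a set \<Rightarrow> 'a set) \<Rightarrow> nat \<Rightarrow> nat" where
  "alpha Vs Nb k = (LEAST n. \<exists>Xs. atom Vs Nb k Xs \<and> card Xs = n)"

text \<open>Cayley graph Cay(<S>, S): vertex set generate G S, image of Xs is Xs S.\<close>

definition cay_atom :: "('a, 'b) monoid_scheme \<Rightarrow> 'a set \<Rightarrow> nat \<Rightarrow> 'a set \<Rightarrow> bool" where
  "cay_atom G S k Xs = atom (generate G S) (\<lambda>Ys. Ys <#>\<^bsub>G\<^esub> S) k Xs"

definition alpha_pos :: "('a, 'b) monoid_scheme \<Rightarrow> 'a set \<Rightarrow> nat \<Rightarrow> nat" where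
  "alpha_pos G S k = alpha (generate G S) (\<lambda>Ys. Ys <#>\<^bsub>G\<^esub> S) k"

text \<open>alpha_{-k}(S) = alpha_k(Cay(<S>, S^{-1})); note <S^{-1}> = <S>.\<close>
definition alpha_neg :: "('a, 'b) monoid_scheme \<Rightarrow> 'a set \<Rightarrow> nat \<Rightarrow> nat" where
  "alpha_neg G S k = alpha (generate G (set_inv\<^bsub>G\<^esub> S)) (\<lambda>Ys. Ys <#>\<^bsub>G\<^esub> (set_inv\<^bsub>G\<^esub> S)) k"

definition left_period :: "('a, 'b) monoid_scheme \<Rightarrow> 'a set \<Rightarrow> 'a set" where
  "left_period G Xs = {x \<in> carrier G. x <#\<^bsub>G\<^esub> Xs = Xs}"

end

theory Submission
  imports Defs
begin


definition nbok :: "'a set \<Rightarrow> ('a set \<Rightarrow> 'a set) \<Rightarrow> bool" where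
 "nbok Vs Nb \<longleftrightarrow> (\<forall>U W. U \<subseteq> W \<longrightarrow> Nb U \<subseteq> Nb W) \<and> (\<forall>U. U \<subseteq> Vs \<longrightarrow> U \<subseteq> Nb U \<and> Nb U \<subseteq> Vs)
   \<and> (\<forall>U. finite U \<longrightarrow> finite (Nb U)) \<and> (\<forall>A B. Nb (A \<union> B) = Nb A \<union> Nb B)"

lemma nbok_mono: assumes "nbok Vs Nb" "U \<subseteq> W" shows "Nb U \<subseteq> Nb W"
proof -
  have "\<forall>U W. U \<subseteq> W \<longrightarrow> Nb U \<subseteq> Nb W" using assms(1) unfolding nbok_def by (rule conjunct1)
  then show ?thesis using assms(2) by simp
qed
lemma nbok_ext: assumes "nbok Vs Nb" "U \<subseteq> Vs" shows "U \<subseteq> Nb U" "Nb U \<subseteq> Vs"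
proof -
  have "\<forall>U. U \<subseteq> Vs \<longrightarrow> U \<subseteq> Nb U \<and> Nb U \<subseteq> Vs" using assms(1) unfolding nbok_def
    by (rule conjunct1[OF conjunct2])
  then show "U \<subseteq> Nb U" "Nb U \<subseteq> Vs" using assms(2) by simp_all
qed
lemma nbok_sub: "nbok Vs Nb \<Longrightarrow> U \<subseteq> Vs \<Longrightarrow> Nb U \<subseteq> Vs" by (rule nbok_ext(2))
lemma nbok_fin: assumes "nbok Vs Nb" "finite U" shows "finite (Nb U)"
proof -
  have "\<forall>U. finite U \<longrightarrow> finite (Nb U)" using assms(1) unfolding nbok_def
    by (rule conjunct1[OF conjunct2[OF conjunct2]])
  then show ?thesis using assms(2) by simp
qed
lemma nbok_un: assumes "nbok Vs Nb" shows "Nb (A \<union> B) = Nb A \<union> Nb B"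
proof -
  have "\<forall>A B. Nb (A \<union> B) = Nb A \<union> Nb B" using assms(1) unfolding nbok_def
    by (rule conjunct2[OF conjunct2[OF conjunct2]])
  then show ?thesis by simp
qed

lemma at_least_mono: assumes "A \<subseteq> B" "at_least k A" shows "at_least k B"
proof (cases "finite B")
  case True
  then have "finite A" using assms(1) finite_subset by blast
  then have "k \<le> card A" using assms(2) unfolding at_least_def by simp
  moreover have "card A \<le> card B" using True assms(1) by (rule card_mono)
  ultimately show ?thesis unfolding at_least_def by simp
next
  case False
  then show ?thesis unfolding at_least_def by simp
qed

lemma kappa_le: "separable Vs Nb k \<Longrightarrow> admissible Vs Nb k U \<Longrightarrow> kappa Vs Nb k \<le> card (Nb U - U)"
proof -
  assume sep: "separable Vs Nb k" and a: "admissible Vs Nb k U"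
  have "kappa Vs Nb k = (LEAST n. \<exists>Xs. admissible Vs Nb k Xs \<and> card (Nb Xs - Xs) = n)"
    unfolding kappa_def using sep by (rule if_P)
  also have "\<dots> \<le> card (Nb U - U)" by (rule Least_le) (use a in blast)
  finally show ?thesis .
qed

lemma frag_sep: "separable Vs Nb k \<Longrightarrow> fragment Vs Nb k U \<longleftrightarrow> admissible Vs Nb k U \<and> card (Nb U - U) = kappa Vs Nb k"
  by (simp add: fragment_def)

lemma atom_le: "atom Vs Nb k A \<Longrightarrow> fragment Vs Nb k W \<Longrightarrow> card A \<le> card W"
  by (simp add: atom_def)

lemma atom_frag: "atom Vs Nb k A \<Longrightarrow> fragment Vs Nb k A"
  by (simp add: atom_def)

lemma card_bd: assumes "nbok Vs Nb" "finite U" "U \<subseteq> Vs"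
  shows "card (Nb U - U) + card U = card (Nb U)"
proof -
  have "U \<subseteq> Nb U" "finite (Nb U)" using nbok_ext[OF assms(1) assms(3)] nbok_fin[OF assms(1) assms(2)] by auto
  then have "card (Nb U - U) = card (Nb U) - card U" "card U \<le> card (Nb U)"
    using card_Diff_subset[OF assms(2)] card_mono by blast+
  then show ?thesis by linarith
qed

lemma inter_adm: assumes "admissible Vs Nb k A" "admissible Vs Nb k B" "k \<le> card (A \<inter> B)" "nbok Vs Nb"
  shows "admissible Vs Nb k (A \<inter> B)"
proof -
  have "Nb (A \<inter> B) \<subseteq> Nb A" by (rule nbok_mono[OF assms(4)]) blast
  then have s: "Vs - Nb A \<subseteq> Vs - Nb (A \<inter> B)" by blast
  have "at_least k (Vs - Nb A)" using assms(1) unfolding admissible_def by simp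
  then have "at_least k (Vs - Nb (A \<inter> B))" by (rule at_least_mono[OF s])
  then show ?thesis using assms(1,3) unfolding admissible_def by auto
qed

lemma submod: assumes "nbok Vs Nb" "finite A" "finite B"
  shows "card (Nb (A \<inter> B)) + card (Nb (A \<union> B)) \<le> card (Nb A) + card (Nb B)"
proof -
  have f: "finite (Nb A)" "finite (Nb B)" using assms nbok_fin by auto
  have m: "\<And>U W. U \<subseteq> W \<Longrightarrow> Nb U \<subseteq> Nb W" using nbok_mono[OF assms(1)] by blast
  have "Nb (A \<inter> B) \<subseteq> Nb A \<inter> Nb B" using m[of "A \<inter> B" A] m[of "A \<inter> B" B] by blast
  then have "card (Nb (A \<inter> B)) \<le> card (Nb A \<inter> Nb B)" using f by (simp add: card_mono)
  moreover have "card (Nb (A \<union> B)) = card (Nb A \<union> Nb B)" using nbok_un[OF assms(1)] by simp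
  moreover have "card (Nb A \<union> Nb B) + card (Nb A \<inter> Nb B) = card (Nb A) + card (Nb B)"
    using card_Un_Int[OF f] by simp
  ultimately show ?thesis by linarith
qed

lemma atoms_card: "atom Vs Nb k A \<Longrightarrow> atom Vs Nb k B \<Longrightarrow> card A = card B"
  by (meson atom_def le_antisym)

lemma inter_case1:
  assumes sep: "separable Vs Nb k" and nb: "nbok Vs Nb" and A: "atom Vs Nb k A" and B: "atom Vs Nb k B"
    and k: "k \<le> card (A \<inter> B)" and al: "at_least k (Vs - Nb (A \<union> B))"
  shows "A = B"
proof -
  have fA: "fragment Vs Nb k A" and fB: "fragment Vs Nb k B" using A B atom_frag by auto
  then have aA: "admissible Vs Nb k A" and aB: "admissible Vs Nb k B"
    and bA: "card (Nb A - A) = kappa Vs Nb k" and bB: "card (Nb B - B) = kappa Vs Nb k"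
    using sep frag_sep by blast+
  have finA: "finite A" "A \<subseteq> Vs" and finB: "finite B" "B \<subseteq> Vs" using aA aB unfolding admissible_def by auto
  have aI: "admissible Vs Nb k (A \<inter> B)" using inter_adm aA aB k nb by blast
  have "card (A \<inter> B) \<le> card (A \<union> B)" using finA finB by (intro card_mono) auto
  then have aU: "admissible Vs Nb k (A \<union> B)" using finA finB al k unfolding admissible_def by simp
  have kI: "kappa Vs Nb k \<le> card (Nb (A \<inter> B) - (A \<inter> B))" using kappa_le sep aI by blast
  have kU: "kappa Vs Nb k \<le> card (Nb (A \<union> B) - (A \<union> B))" using kappa_le sep aU by blast
  have s: "card (Nb (A \<inter> B)) + card (Nb (A \<union> B)) \<le> card (Nb A) + card (Nb B)"
    using submod nb finA finB by blast
  have c1: "card (Nb (A \<inter> B) - (A \<inter> B)) + card (A \<inter> B) = card (Nb (A \<inter> B))"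
    using card_bd[OF nb] finA by blast
  have c2: "card (Nb (A \<union> B) - (A \<union> B)) + card (A \<union> B) = card (Nb (A \<union> B))"
    using card_bd[OF nb] finA finB by blast
  have c3: "card (Nb A - A) + card A = card (Nb A)" using card_bd[OF nb] finA by blast
  have c4: "card (Nb B - B) + card B = card (Nb B)" using card_bd[OF nb] finB by blast
  have c5: "card (A \<union> B) + card (A \<inter> B) = card A + card B" using card_Un_Int finA finB by metis
  have "card (Nb (A \<inter> B) - (A \<inter> B)) = kappa Vs Nb k"
    using s c1 c2 c3 c4 c5 kI kU bA bB by linarith
  then have "fragment Vs Nb k (A \<inter> B)" using sep aI frag_sep by blast
  then have "card A \<le> card (A \<inter> B)" "card B \<le> card (A \<inter> B)" using A B atom_le by blast+
  then have "A \<inter> B = A" "A \<inter> B = B" using finA finB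
    by (metis Int_lower1 Int_lower2 card_seteq)+
  then show ?thesis by simp
qed

lemma inter_case2:
  assumes sep: "separable Vs Nb k" and nb: "nbok Vs Nb" and A: "atom Vs Nb k A" and B: "atom Vs Nb k B"
    and k: "k \<le> card (A \<inter> B)" and fin: "finite Vs" and lt: "card (Vs - Nb (A \<union> B)) < k"
    and big: "2 * card A + kappa Vs Nb k \<le> card Vs"
  shows False
proof -
  have fA: "fragment Vs Nb k A" and fB: "fragment Vs Nb k B" using A B atom_frag by auto
  then have aA: "admissible Vs Nb k A" and aB: "admissible Vs Nb k B"
    and bA: "card (Nb A - A) = kappa Vs Nb k" and bB: "card (Nb B - B) = kappa Vs Nb k"
    using sep frag_sep by blast+
  have finA: "finite A" "A \<subseteq> Vs" and finB: "finite B" "B \<subseteq> Vs" using aA aB unfolding admissible_def by auto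
  have aI: "admissible Vs Nb k (A \<inter> B)" using inter_adm aA aB k nb by blast
  have kI: "kappa Vs Nb k \<le> card (Nb (A \<inter> B) - (A \<inter> B))" using kappa_le sep aI by blast
  have s: "card (Nb (A \<inter> B)) + card (Nb (A \<union> B)) \<le> card (Nb A) + card (Nb B)"
    using submod nb finA finB by blast
  have c1: "card (Nb (A \<inter> B) - (A \<inter> B)) + card (A \<inter> B) = card (Nb (A \<inter> B))"
    using card_bd[OF nb] finA by blast
  have c3: "card (Nb A - A) + card A = card (Nb A)" using card_bd[OF nb] finA by blast
  have c4: "card (Nb B - B) + card B = card (Nb B)" using card_bd[OF nb] finB by blast
  have eq: "card A = card B" using atoms_card A B by blast
  have "Vs \<subseteq> Nb (A \<union> B) \<union> (Vs - Nb (A \<union> B))" by blast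
  then have "card Vs \<le> card (Nb (A \<union> B) \<union> (Vs - Nb (A \<union> B)))"
    using fin finA finB nbok_fin[OF nb, of "A \<union> B"] by (intro card_mono) auto
  also have "\<dots> \<le> card (Nb (A \<union> B)) + card (Vs - Nb (A \<union> B))" by (rule card_Un_le)
  finally have "card Vs \<le> card (Nb (A \<union> B)) + card (Vs - Nb (A \<union> B))" .
  then show False using s c1 c3 c4 eq kI bA bB k lt big by linarith
qed

lemma in_nb:
  assumes sep: "separable Vs Nb k" and nb: "nbok Vs Nb" and H: "atom Vs Nb k H"
    and c: "Suc k \<le> card H" and h: "h \<in> H" and nh: "h \<notin> Nb (H - {h})"
  shows False
proof -
  have fH: "fragment Vs Nb k H" using H atom_frag by auto
  then have aH: "admissible Vs Nb k H" and bH: "card (Nb H - H) = kappa Vs Nb k"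
    using sep frag_sep by blast+
  have finH: "finite H" "H \<subseteq> Vs" using aH unfolding admissible_def by auto
  let ?U = "H - {h}"
  have sub: "Nb ?U \<subseteq> Nb H" using nbok_mono[OF nb] by blast
  have cX: "card ?U = card H - 1" using h finH by simp
  have aX: "admissible Vs Nb k ?U" unfolding admissible_def
  proof (intro conjI)
    show "finite ?U" using finH by simp
    show "?U \<subseteq> Vs" using finH by blast
    show "k \<le> card ?U" using cX c by linarith
    show "at_least k (Vs - Nb ?U)" using aH sub at_least_mono[of "Vs - Nb H" "Vs - Nb ?U" k]
      unfolding admissible_def by blast
  qed
  have "Nb ?U - ?U \<subseteq> Nb H - H" using sub nh by blast
  then have "card (Nb ?U - ?U) \<le> card (Nb H - H)"
    using finH nbok_fin[OF nb, of H] by (intro card_mono) auto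
  moreover have "kappa Vs Nb k \<le> card (Nb ?U - ?U)" using kappa_le sep aX by blast
  ultimately have "fragment Vs Nb k ?U" using bH sep aX frag_sep by (metis le_antisym)
  then have "card H \<le> card ?U" using H atom_le by blast
  then show False using cX c by linarith
qed

definition dualnb :: "'a set \<Rightarrow> ('a set \<Rightarrow> 'a set) \<Rightarrow> ('a set \<Rightarrow> 'a set) \<Rightarrow> bool" where
  "dualnb Vs Nb Nb' \<longleftrightarrow> (\<forall>U W. U \<subseteq> Vs \<longrightarrow> W \<subseteq> Vs \<longrightarrow> (Nb U \<inter> W = {} \<longleftrightarrow> U \<inter> Nb' W = {}))"

lemma dual_sym: "dualnb Vs Nb Nb' \<Longrightarrow> dualnb Vs Nb' Nb"
  unfolding dualnb_def by blast

lemma dual_adm: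
  assumes fin: "finite Vs" and nb: "nbok Vs Nb" and nb': "nbok Vs Nb'" and d: "dualnb Vs Nb Nb'"
    and aX: "admissible Vs Nb k U"
  shows "admissible Vs Nb' k (Vs - Nb U) \<and> Nb' (Vs - Nb U) - (Vs - Nb U) \<subseteq> Nb U - U"
proof -
  have U: "finite U" "U \<subseteq> Vs" "k \<le> card U" "at_least k (Vs - Nb U)" using aX unfolding admissible_def by auto
  have "Nb U \<inter> (Vs - Nb U) = {}" by blast
  then have e: "U \<inter> Nb' (Vs - Nb U) = {}" using d U unfolding dualnb_def by blast
  have s': "Nb' (Vs - Nb U) \<subseteq> Vs" using nbok_sub[OF nb', of "Vs - Nb U"] by blast
  have "U \<subseteq> Vs - Nb' (Vs - Nb U)" using e U by blast
  then have "k \<le> card (Vs - Nb' (Vs - Nb U))" using U fin by (meson card_mono finite_Diff le_trans)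
  moreover have "k \<le> card (Vs - Nb U)" using U(4) fin unfolding at_least_def by auto
  ultimately have "admissible Vs Nb' k (Vs - Nb U)" unfolding admissible_def at_least_def using fin by auto
  moreover have "Nb' (Vs - Nb U) - (Vs - Nb U) \<subseteq> Nb U - U" using e s' by blast
  ultimately show ?thesis by blast
qed

lemma dual_frag:
  assumes fin: "finite Vs" and nb: "nbok Vs Nb" and nb': "nbok Vs Nb'" and d: "dualnb Vs Nb Nb'"
    and sep: "separable Vs Nb k" and fA: "fragment Vs Nb k A"
  shows "fragment Vs Nb' k (Vs - Nb A)"
proof -
  have aA: "admissible Vs Nb k A" and bA: "card (Nb A - A) = kappa Vs Nb k" using fA sep frag_sep by blast+
  obtain a': "admissible Vs Nb' k (Vs - Nb A)" and s: "Nb' (Vs - Nb A) - (Vs - Nb A) \<subseteq> Nb A - A"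
    using dual_adm[OF fin nb nb' d aA] by blast
  have sep': "separable Vs Nb' k" using a' separable_def by blast
  have le1: "card (Nb' (Vs - Nb A) - (Vs - Nb A)) \<le> kappa Vs Nb k"
  proof -
    have "finite (Nb A - A)" using nbok_fin[OF nb] aA unfolding admissible_def by auto
    then show ?thesis using s bA card_mono by metis
  qed
  have le2: "kappa Vs Nb k \<le> card (Nb' W - W)" if aW: "admissible Vs Nb' k W" for W
  proof -
    obtain a'': "admissible Vs Nb k (Vs - Nb' W)" and s'': "Nb (Vs - Nb' W) - (Vs - Nb' W) \<subseteq> Nb' W - W"
      using dual_adm[OF fin nb' nb dual_sym[OF d] aW] by blast
    have "card (Nb (Vs - Nb' W) - (Vs - Nb' W)) \<le> card (Nb' W - W)"
    proof -
      have "finite (Nb' W - W)" using nbok_fin[OF nb'] aW unfolding admissible_def by auto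
      then show ?thesis using s'' card_mono by metis
    qed
    then show ?thesis using kappa_le[OF sep a''] by linarith
  qed
  have "(LEAST n. \<exists>Xs. admissible Vs Nb' k Xs \<and> card (Nb' Xs - Xs) = n) = card (Nb' (Vs - Nb A) - (Vs - Nb A))"
  proof (rule Least_equality)
    show "\<exists>Xs. admissible Vs Nb' k Xs \<and> card (Nb' Xs - Xs) = card (Nb' (Vs - Nb A) - (Vs - Nb A))"
      using a' by blast
    fix n assume "\<exists>Xs. admissible Vs Nb' k Xs \<and> card (Nb' Xs - Xs) = n"
    then obtain W where "admissible Vs Nb' k W" "card (Nb' W - W) = n" by blast
    then have "kappa Vs Nb k \<le> n" using le2[of W] by simp
    then show "card (Nb' (Vs - Nb A) - (Vs - Nb A)) \<le> n" using le1 by linarith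
  qed
  moreover have "kappa Vs Nb' k = (LEAST n. \<exists>Xs. admissible Vs Nb' k Xs \<and> card (Nb' Xs - Xs) = n)"
    unfolding kappa_def using sep' by (rule if_P)
  ultimately have "kappa Vs Nb' k = card (Nb' (Vs - Nb A) - (Vs - Nb A))" by simp
  then show ?thesis using frag_sep[OF sep'] a' by simp
qed

lemma alpha_le_frag: assumes "fragment Vs Nb k U" shows "alpha Vs Nb k \<le> card U"
proof -
  let ?m = "LEAST c. \<exists>W. fragment Vs Nb k W \<and> card W = c"
  obtain W where W: "fragment Vs Nb k W" "card W = ?m"
    using LeastI_ex[of "\<lambda>c. \<exists>W. fragment Vs Nb k W \<and> card W = c"] assms by blast
  have "atom Vs Nb k W" unfolding atom_def using W by (auto intro: Least_le)
  then have "alpha Vs Nb k \<le> card W" unfolding alpha_def by (auto intro: Least_le)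
  moreover have "?m \<le> card U" using assms by (auto intro: Least_le)
  ultimately show ?thesis using W by linarith
qed

lemma alpha_atom: assumes A: "atom Vs Nb k A" shows "alpha Vs Nb k = card A"
proof -
  have le: "card A \<le> n" if ex: "\<exists>Xs. atom Vs Nb k Xs \<and> card Xs = n" for n
  proof -
    obtain B where B: "atom Vs Nb k B" "card B = n" using ex by blast
    have "fragment Vs Nb k B" using B(1) by (rule atom_frag)
    then have "card A \<le> card B" by (rule atom_le[OF A])
    then show ?thesis using B(2) by simp
  qed
  have "(LEAST n. \<exists>Xs. atom Vs Nb k Xs \<and> card Xs = n) = card A"
    by (rule Least_equality) (use A le in blast)+
  then show ?thesis unfolding alpha_def .
qed



context group begin

lemma cay_nbok: assumes "S \<subseteq> carrier G" "finite S" "\<one> \<in> S"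
  shows "nbok (carrier G) (\<lambda>Ys. Ys <#> S)"
  unfolding nbok_def
proof (intro conjI allI impI)
  fix U W :: "'a set" assume "U \<subseteq> W" then show "U <#> S \<subseteq> W <#> S" unfolding set_mult_def by blast
next
  fix U assume U: "U \<subseteq> carrier G"
  show "U \<subseteq> U <#> S"
  proof
    fix x assume "x \<in> U"
    then have "x = x \<otimes> \<one>" "x \<in> U" using U by auto
    then show "x \<in> U <#> S" unfolding set_mult_def using assms(3) by blast
  qed
  show "U <#> S \<subseteq> carrier G" unfolding set_mult_def using U assms(1) by auto
next
  fix U :: "'a set" assume "finite U" then show "finite (U <#> S)" unfolding set_mult_def using assms(2) by auto
next
  fix A B show "(A \<union> B) <#> S = (A <#> S) \<union> (B <#> S)" unfolding set_mult_def by blast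
qed

lemma set_inv_props: assumes "S \<subseteq> carrier G" "finite S" "\<one> \<in> S"
  shows "set_inv S \<subseteq> carrier G" "finite (set_inv S)" "\<one> \<in> set_inv S"
proof -
  show "set_inv S \<subseteq> carrier G" unfolding SET_INV_def using assms(1) by auto
  show "finite (set_inv S)" unfolding SET_INV_def using assms(2) by auto
  have "\<one> = inv \<one>" by simp
  then show "\<one> \<in> set_inv S" unfolding SET_INV_def using assms(3) by blast
qed

lemma cay_dual: assumes "S \<subseteq> carrier G"
  shows "dualnb (carrier G) (\<lambda>Ys. Ys <#> S) (\<lambda>Ys. Ys <#> set_inv S)"
  unfolding dualnb_def
proof (intro allI impI)
  fix U W assume U: "U \<subseteq> carrier G" and W: "W \<subseteq> carrier G"
  have "(\<exists>x\<in>U. \<exists>s\<in>S. x \<otimes> s \<in> W) \<longleftrightarrow> (\<exists>y\<in>W. \<exists>s\<in>S. y \<otimes> inv s \<in> U)"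
  proof
    assume "\<exists>x\<in>U. \<exists>s\<in>S. x \<otimes> s \<in> W"
    then obtain x s where xs: "x \<in> U" "s \<in> S" "x \<otimes> s \<in> W" by blast
    have "(x \<otimes> s) \<otimes> inv s = x" using xs U assms by (simp add: m_assoc subsetD)
    then show "\<exists>y\<in>W. \<exists>s\<in>S. y \<otimes> inv s \<in> U" using xs by metis
  next
    assume "\<exists>y\<in>W. \<exists>s\<in>S. y \<otimes> inv s \<in> U"
    then obtain y s where ys: "y \<in> W" "s \<in> S" "y \<otimes> inv s \<in> U" by blast
    have "(y \<otimes> inv s) \<otimes> s = y" using ys W assms by (simp add: m_assoc subsetD)
    then show "\<exists>x\<in>U. \<exists>s\<in>S. x \<otimes> s \<in> W" using ys by metis
  qed
  moreover have "((U <#> S) \<inter> W = {}) \<longleftrightarrow> \<not>(\<exists>x\<in>U. \<exists>s\<in>S. x \<otimes> s \<in> W)"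
    unfolding set_mult_def by auto
  moreover have "(U \<inter> (W <#> set_inv S) = {}) \<longleftrightarrow> \<not>(\<exists>y\<in>W. \<exists>s\<in>S. y \<otimes> inv s \<in> U)"
    unfolding set_mult_def SET_INV_def by auto
  ultimately show "((U <#> S) \<inter> W = {}) = (U \<inter> (W <#> set_inv S) = {})" by simp
qed

lemma gen_inv: assumes "S \<subseteq> carrier G" "generate G S = carrier G"
  shows "generate G (set_inv S) = carrier G"
proof
  have si: "set_inv S \<subseteq> carrier G" unfolding SET_INV_def using assms(1) by auto
  then show "generate G (set_inv S) \<subseteq> carrier G" by (rule generate_incl)
  have sg: "subgroup (generate G (set_inv S)) G" using si by (rule generate_is_subgroup)
  have "S \<subseteq> generate G (set_inv S)"
  proof
    fix s assume s: "s \<in> S"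
    then have "inv s \<in> set_inv S" unfolding SET_INV_def by blast
    then have "inv s \<in> generate G (set_inv S)" by (rule generate.incl)
    then have "inv (inv s) \<in> generate G (set_inv S)" by (rule subgroup.m_inv_closed[OF sg])
    then show "s \<in> generate G (set_inv S)" using s assms(1) by (simp add: subsetD)
  qed
  then have "generate G S \<subseteq> generate G (set_inv S)" using sg by (rule generate_subgroup_incl)
  then show "carrier G \<subseteq> generate G (set_inv S)" using assms(2) by simp
qed

lemma lcos_img: "g <# U = (\<lambda>x. g \<otimes> x) ` U" unfolding l_coset_def by auto

lemma lcos_inj: "g \<in> carrier G \<Longrightarrow> inj_on (\<lambda>x. g \<otimes> x) (carrier G)"
  by (rule inj_onI) simp

lemma lcos_card: "g \<in> carrier G \<Longrightarrow> U \<subseteq> carrier G \<Longrightarrow> card (g <# U) = card U"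
  unfolding lcos_img by (meson card_image inj_on_subset lcos_inj)

lemma lcos_fin: "g \<in> carrier G \<Longrightarrow> U \<subseteq> carrier G \<Longrightarrow> finite (g <# U) \<longleftrightarrow> finite U"
  unfolding lcos_img by (meson finite_image_iff inj_on_subset lcos_inj)

lemma lcos_diff: "g \<in> carrier G \<Longrightarrow> A \<subseteq> carrier G \<Longrightarrow> B \<subseteq> carrier G \<Longrightarrow> g <# (A - B) = (g <# A) - (g <# B)"
  unfolding lcos_img by (rule inj_on_image_set_diff[OF lcos_inj]) auto

lemma lcos_carrier: assumes "g \<in> carrier G" shows "g <# carrier G = carrier G"
proof
  show "g <# carrier G \<subseteq> carrier G" unfolding lcos_img using assms by auto
  show "carrier G \<subseteq> g <# carrier G"
  proof
    fix x assume x: "x \<in> carrier G"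
    then have "x = g \<otimes> (inv g \<otimes> x)" using assms by (simp add: m_assoc[symmetric])
    then show "x \<in> g <# carrier G" unfolding lcos_img using x assms by blast
  qed
qed

lemma lcos_nb: assumes "g \<in> carrier G" "U \<subseteq> carrier G" "S \<subseteq> carrier G"
  shows "(g <# U) <#> S = g <# (U <#> S)"
  unfolding l_coset_def set_mult_def using assms by (auto simp: m_assoc subsetD)

lemma lcos_sub: "g \<in> carrier G \<Longrightarrow> U \<subseteq> carrier G \<Longrightarrow> g <# U \<subseteq> carrier G"
  unfolding lcos_img by auto

lemma adm_trans: assumes S: "S \<subseteq> carrier G" "finite S" "\<one> \<in> S" and g: "g \<in> carrier G"
    and a: "admissible (carrier G) (\<lambda>Ys. Ys <#> S) k U"
  shows "admissible (carrier G) (\<lambda>Ys. Ys <#> S) k (g <# U)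
    \<and> card (((g <# U) <#> S) - (g <# U)) = card ((U <#> S) - U)"
proof -
  have U: "finite U" "U \<subseteq> carrier G" "k \<le> card U" "at_least k (carrier G - (U <#> S))"
    using a unfolding admissible_def by auto
  have N: "U <#> S \<subseteq> carrier G" using nbok_sub[OF cay_nbok[OF S] U(2)] .
  have e1: "(g <# U) <#> S = g <# (U <#> S)" using lcos_nb g U S by blast
  have e2: "carrier G - ((g <# U) <#> S) = g <# (carrier G - (U <#> S))"
    using e1 lcos_diff[OF g, of "carrier G" "U <#> S"] N lcos_carrier[OF g] by simp
  have "at_least k (g <# (carrier G - (U <#> S)))"
    using U(4) lcos_fin[OF g, of "carrier G - (U <#> S)"] lcos_card[OF g, of "carrier G - (U <#> S)"]
    unfolding at_least_def by auto
  then have al: "at_least k (carrier G - ((g <# U) <#> S))" using e2 by simp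
  have "admissible (carrier G) (\<lambda>Ys. Ys <#> S) k (g <# U)"
    unfolding admissible_def using U lcos_fin[OF g U(2)] lcos_card[OF g U(2)] lcos_sub[OF g U(2)] al by simp
  moreover have "((g <# U) <#> S) - (g <# U) = g <# ((U <#> S) - U)"
    using e1 lcos_diff[OF g N U(2)] by simp
  moreover have "card (g <# ((U <#> S) - U)) = card ((U <#> S) - U)" using lcos_card[OF g] N by blast
  ultimately show ?thesis by simp
qed

lemma frag_trans: assumes S: "S \<subseteq> carrier G" "finite S" "\<one> \<in> S" and g: "g \<in> carrier G"
    and sep: "separable (carrier G) (\<lambda>Ys. Ys <#> S) k"
    and f: "fragment (carrier G) (\<lambda>Ys. Ys <#> S) k U"
  shows "fragment (carrier G) (\<lambda>Ys. Ys <#> S) k (g <# U)"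
proof -
  have "admissible (carrier G) (\<lambda>Ys. Ys <#> S) k U" "card ((U <#> S) - U) = kappa (carrier G) (\<lambda>Ys. Ys <#> S) k"
    using f frag_sep[OF sep] by simp_all
  then show ?thesis using adm_trans[OF S g] frag_sep[OF sep] by simp
qed

lemma atom_trans: assumes S: "S \<subseteq> carrier G" "finite S" "\<one> \<in> S" and g: "g \<in> carrier G"
    and sep: "separable (carrier G) (\<lambda>Ys. Ys <#> S) k"
    and A: "atom (carrier G) (\<lambda>Ys. Ys <#> S) k A"
  shows "atom (carrier G) (\<lambda>Ys. Ys <#> S) k (g <# A)"
  unfolding atom_def
proof (intro conjI allI impI)
  have fA: "fragment (carrier G) (\<lambda>Ys. Ys <#> S) k A" using A by (rule atom_frag)
  then show "fragment (carrier G) (\<lambda>Ys. Ys <#> S) k (g <# A)" using frag_trans[OF S g sep] by simp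
  have Asub: "A \<subseteq> carrier G" using fA frag_sep[OF sep] unfolding admissible_def by simp
  fix W assume fW: "fragment (carrier G) (\<lambda>Ys. Ys <#> S) k W"
  have Wsub: "W \<subseteq> carrier G" using fW frag_sep[OF sep] unfolding admissible_def by simp
  have ig: "inv g \<in> carrier G" using g by simp
  have "fragment (carrier G) (\<lambda>Ys. Ys <#> S) k (inv g <# W)" using frag_trans[OF S ig sep fW] .
  then have "card A \<le> card (inv g <# W)" by (rule atom_le[OF A])
  then show "card (g <# A) \<le> card W" using lcos_card[OF ig Wsub] lcos_card[OF g Asub] by simp
qed

end



context group begin

lemma cay_inter: assumes S: "S \<subseteq> carrier G" "finite S" "\<one> \<in> S" and gen: "generate G S = carrier G"
  and hyp: "infinite (carrier G) \<or> alpha_pos G S 2 \<le> alpha_neg G S 2"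
  and sep: "separable (carrier G) (\<lambda>Ys. Ys <#> S) 2"
  and A: "atom (carrier G) (\<lambda>Ys. Ys <#> S) 2 A" and B: "atom (carrier G) (\<lambda>Ys. Ys <#> S) 2 B"
  and k: "2 \<le> card (A \<inter> B)"
  shows "A = B"
proof (cases "at_least 2 (carrier G - ((A \<union> B) <#> S))")
  case True
  show ?thesis by (rule inter_case1[OF sep cay_nbok[OF S] A B k]) (use True in simp)
next
  case False
  have nb: "nbok (carrier G) (\<lambda>Ys. Ys <#> S)" by (rule cay_nbok[OF S])
  have fA: "fragment (carrier G) (\<lambda>Ys. Ys <#> S) 2 A" using A by (rule atom_frag)
  have fB: "fragment (carrier G) (\<lambda>Ys. Ys <#> S) 2 B" using B by (rule atom_frag)
  have aA: "admissible (carrier G) (\<lambda>Ys. Ys <#> S) 2 A" and bA: "card ((A <#> S) - A) = kappa (carrier G) (\<lambda>Ys. Ys <#> S) 2"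
    using fA frag_sep[OF sep] by simp_all
  have aB: "admissible (carrier G) (\<lambda>Ys. Ys <#> S) 2 B" using fB frag_sep[OF sep] by simp
  have finA: "finite A" "A \<subseteq> carrier G" using aA unfolding admissible_def by auto
  have finB: "finite B" "B \<subseteq> carrier G" using aB unfolding admissible_def by auto
  have fU: "finite ((A \<union> B) <#> S)" using nbok_fin[OF nb, of "A \<union> B"] finA finB by simp
  have fD: "finite (carrier G - ((A \<union> B) <#> S))" and lt: "card (carrier G - ((A \<union> B) <#> S)) < 2"
    using False unfolding at_least_def by auto
  have "carrier G \<subseteq> ((A \<union> B) <#> S) \<union> (carrier G - ((A \<union> B) <#> S))" by blast
  then have fin: "finite (carrier G)" using fU fD finite_subset by blast
  then have hyp2: "alpha_pos G S 2 \<le> alpha_neg G S 2" using hyp by simp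
  have ap: "alpha_pos G S 2 = card A" unfolding alpha_pos_def gen by (rule alpha_atom[OF A])
  have nb': "nbok (carrier G) (\<lambda>Ys. Ys <#> set_inv S)" using cay_nbok set_inv_props[OF S] by blast
  have fA': "fragment (carrier G) (\<lambda>Ys. Ys <#> set_inv S) 2 (carrier G - (A <#> S))"
    using dual_frag[OF fin nb nb' cay_dual[OF S(1)] sep fA] by simp
  have an: "alpha_neg G S 2 \<le> card (carrier G - (A <#> S))"
    unfolding alpha_neg_def gen_inv[OF S(1) gen] by (rule alpha_le_frag[OF fA'])
  have NA: "A <#> S \<subseteq> carrier G" by (rule nbok_sub[OF nb finA(2)])
  have fNA: "finite (A <#> S)" by (rule nbok_fin[OF nb finA(1)])
  have "card (carrier G - (A <#> S)) = card (carrier G) - card (A <#> S)"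
    by (rule card_Diff_subset[OF fNA NA])
  moreover have "card (A <#> S) \<le> card (carrier G)" by (rule card_mono[OF fin NA])
  moreover have "card ((A <#> S) - A) + card A = card (A <#> S)" using card_bd[OF nb finA] by simp
  ultimately have "2 * card A + kappa (carrier G) (\<lambda>Ys. Ys <#> S) 2 \<le> card (carrier G)"
    using ap an hyp2 bA by linarith
  moreover have "card (carrier G - (\<lambda>Ys. Ys <#> S) (A \<union> B)) < 2" using lt by simp
  ultimately show ?thesis using inter_case2[OF sep nb A B k fin] by blast
qed

lemma main_in: assumes S: "S \<subseteq> carrier G" "finite S" "\<one> \<in> S" and gen: "generate G S = carrier G"
  and c3: "card S \<ge> 3"
  and hyp: "infinite (carrier G) \<or> alpha_pos G S 2 \<le> alpha_neg G S 2"
  and Hc: "cay_atom G S 2 H" and H1: "\<one> \<in> H" and per: "card (left_period G H) = 1"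
  shows "card H \<le> card S - 1"
proof -
  have HA: "atom (carrier G) (\<lambda>Ys. Ys <#> S) 2 H" using Hc unfolding cay_atom_def gen .
  have fH: "fragment (carrier G) (\<lambda>Ys. Ys <#> S) 2 H" using HA by (rule atom_frag)
  show ?thesis
  proof (cases "separable (carrier G) (\<lambda>Ys. Ys <#> S) 2")
    case False
    then have "card H = 2" using fH unfolding fragment_def by simp
    then show ?thesis using c3 by simp
  next
    case sep: True
    have nb: "nbok (carrier G) (\<lambda>Ys. Ys <#> S)" by (rule cay_nbok[OF S])
    have aH: "admissible (carrier G) (\<lambda>Ys. Ys <#> S) 2 H" using fH frag_sep[OF sep] by simp
    have finH: "finite H" "H \<subseteq> carrier G" using aH unfolding admissible_def by auto
    show ?thesis
    proof (cases "card H \<le> 2")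
      case True then show ?thesis using c3 by simp
    next
      case False
      then have c: "Suc 2 \<le> card H" by simp
      have ex: "\<exists>s. s \<in> S - {\<one>} \<and> h \<otimes> inv s \<in> H" if h: "h \<in> H" for h
      proof -
        have "h \<in> (H - {h}) <#> S"
        proof (rule ccontr)
          assume "h \<notin> (H - {h}) <#> S"
          then show False using in_nb[OF sep nb HA c h] by simp
        qed
        then obtain x s where xs: "x \<in> H - {h}" "s \<in> S" "h = x \<otimes> s" unfolding set_mult_def by blast
        have xc: "x \<in> carrier G" and sc: "s \<in> carrier G" using xs finH S by auto
        have "s \<noteq> \<one>" using xs xc by auto
        moreover have "h \<otimes> inv s = x" using xs xc sc by (simp add: m_assoc)
        ultimately show ?thesis using xs by auto
      qed
      define f where "f h = (SOME s. s \<in> S - {\<one>} \<and> h \<otimes> inv s \<in> H)" for h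
      have fprop: "f h \<in> S - {\<one>} \<and> h \<otimes> inv (f h) \<in> H" if "h \<in> H" for h
        unfolding f_def by (rule someI_ex[OF ex[OF that]])
      have inj: "inj_on f H"
      proof (rule inj_onI)
        fix h h' assume h: "h \<in> H" and h': "h' \<in> H" and eq: "f h = f h'"
        define s where "s = f h"
        have s: "s \<in> S - {\<one>}" "h \<otimes> inv s \<in> H" "h' \<otimes> inv s \<in> H"
          using fprop[OF h] fprop[OF h'] eq unfolding s_def by auto
        have hc: "h \<in> carrier G" and hc': "h' \<in> carrier G" and sc: "s \<in> carrier G"
          using h h' s finH S by auto
        have ihc: "inv h \<in> carrier G" "inv h' \<in> carrier G" using hc hc' by auto
        define A where "A = inv h <# H"
        define B where "B = inv h' <# H"
        have At: "atom (carrier G) (\<lambda>Ys. Ys <#> S) 2 A" unfolding A_def by (rule atom_trans[OF S ihc(1) sep HA])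
        have Bt: "atom (carrier G) (\<lambda>Ys. Ys <#> S) 2 B" unfolding B_def by (rule atom_trans[OF S ihc(2) sep HA])
        have "inv h \<otimes> h = \<one>" "inv h \<otimes> (h \<otimes> inv s) = inv s" using hc sc by (simp_all add: m_assoc[symmetric])
        then have inA: "\<one> \<in> A" "inv s \<in> A" unfolding A_def lcos_img using h s by (metis image_eqI)+
        have "inv h' \<otimes> h' = \<one>" "inv h' \<otimes> (h' \<otimes> inv s) = inv s" using hc' sc by (simp_all add: m_assoc[symmetric])
        then have inB: "\<one> \<in> B" "inv s \<in> B" unfolding B_def lcos_img using h' s by (metis image_eqI)+
        have ns: "inv s \<noteq> \<one>" using s sc by (metis DiffD2 inv_eq_1_iff singletonI)
        have finA: "finite A" unfolding A_def using lcos_fin[OF ihc(1) finH(2)] finH by simp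
        have "{\<one>, inv s} \<subseteq> A \<inter> B" using inA inB by blast
        then have "card {\<one>, inv s} \<le> card (A \<inter> B)" using finA by (intro card_mono) auto
        then have k: "2 \<le> card (A \<inter> B)" using ns by simp
        have AB: "A = B" by (rule cay_inter[OF S gen hyp sep At Bt k])
        have hA: "h <# A = H" unfolding A_def using lcos_m_assoc[OF finH(2) hc ihc(1)] hc lcos_mult_one[OF finH(2)] by simp
        have hB: "h' <# A = H" unfolding AB B_def using lcos_m_assoc[OF finH(2) hc' ihc(2)] hc' lcos_mult_one[OF finH(2)] by simp
        define g where "g = h \<otimes> inv h'"
        have gc: "g \<in> carrier G" unfolding g_def using hc hc' by simp
        have Asub: "A \<subseteq> carrier G" unfolding A_def by (rule lcos_sub[OF ihc(1) finH(2)])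
        have "g <# H = g <# (h' <# A)" using hB by simp
        also have "\<dots> = (g \<otimes> h') <# A" by (rule lcos_m_assoc[OF Asub gc hc'])
        also have "g \<otimes> h' = h" unfolding g_def using hc hc' by (simp add: m_assoc)
        finally have "g <# H = H" using hA by simp
        then have gp: "g \<in> left_period G H" unfolding left_period_def using gc by simp
        have op: "\<one> \<in> left_period G H" unfolding left_period_def using lcos_mult_one[OF finH(2)] by simp
        obtain a where "left_period G H = {a}" using per card_1_singletonE by blast
        then have "g = \<one>" using gp op by simp
        moreover have "h = (h \<otimes> inv h') \<otimes> h'" using hc hc' by (simp add: m_assoc)
        ultimately show "h = h'" unfolding g_def using hc' by simp
      qed
      have "f ` H \<subseteq> S - {\<one>}"
      proof (rule image_subsetI)
        fix h assume "h \<in> H" then show "f h \<in> S - {\<one>}" using fprop[of h] by simp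
      qed
      moreover have "finite (S - {\<one>})" using S(2) by simp
      ultimately have "card H \<le> card (S - {\<one>})" by (rule card_inj_on_le[OF inj])
      then show ?thesis using S(3) S(2) by simp
    qed
  qed
qed

end


theorem mainTheorem12:
  fixes G :: "('a, 'b) monoid_scheme" and S H :: "'a set"
  assumes "group G"
    and "finite S" and "S \<subseteq> carrier G" and "generate G S = carrier G"
    and "\<one>\<^bsub>G\<^esub> \<in> S" and "card S \<ge> 3"
    and "infinite (carrier G) \<or> alpha_pos G S 2 \<le> alpha_neg G S 2"
    and "cay_atom G S 2 H" and "\<one>\<^bsub>G\<^esub> \<in> H"
    and "card (left_period G H) = 1"
  shows "card H \<le> card S - 1"
  using group.main_in[OF assms(1) assms(3) assms(2) assms(5) assms(4) assms(6) assms(7) assms(8) assms(9) assms(10)] .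

end
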